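(* Let $N$ be a closed normal subgroup of a compact group $G$ and $n\ge1$. Then $d^{(n)}(G)\le d^{(n)}(G/N)$.
   Context: For a compact group $X$, $\mu_X$ denotes its normalized Haar measure and $\mu_X^m$ the product measure on $X^m$. Commutators: $[x,y]=x^{-1}y^{-1}xy$, $[x_1,\dots,x_{k+1}]=[[x_1,\dots,x_k],x_{k+1}]$. For a compact group $X$, $d^{(n)}(X)=\mu_X^{n+1}(\{(x_1,\dots,x_{n+1})\in X^{n+1}: [x_1,\dots,x_{n+1}]=1\})$. *)

theory Defs
  imports "HOL-Analysis.Analysis" "HOL-Algebra.Algebra"
begin

definition topological_group :: "('a, 'b) monoid_scheme \<Rightarrow> 'a topology \<Rightarrow> bool" where
  "topological_group G T \<longleftrightarrow>
     group G \<and> topspace T = carrier G \<and>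
     continuous_map (prod_topology T T) T (\<lambda>(x, y). x \<otimes>\<^bsub>G\<^esub> y) \<and>
     continuous_map T T (\<lambda>x. inv\<^bsub>G\<^esub> x)"

definition compact_group :: "('a, 'b) monoid_scheme \<Rightarrow> 'a topology \<Rightarrow> bool" where
  "compact_group G T \<longleftrightarrow> topological_group G T \<and> compact_space T \<and> Hausdorff_space T"

definition quot_topology :: "('a, 'b) monoid_scheme \<Rightarrow> 'a topology \<Rightarrow> 'a set \<Rightarrow> 'a set topology" where
  "quot_topology G T N = topology (\<lambda>U. U \<subseteq> rcosets\<^bsub>G\<^esub> N \<and> openin T (\<Union>U))"

text \<open>Normalized Haar measure of a compact group: a Radon (outer regular on Borel sets,
inner regular by compact sets on open sets) probability measure on the Borel sets of T,
invariant under left translations.\<close>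

definition haar_measure :: "('a, 'b) monoid_scheme \<Rightarrow> 'a topology \<Rightarrow> 'a measure \<Rightarrow> bool" where
  "haar_measure G T M \<longleftrightarrow>
     space M = topspace T \<and>
     sets M = sigma_sets (topspace T) {U. openin T U} \<and>
     emeasure M (topspace T) = 1 \<and>
     (\<forall>g\<in>carrier G. \<forall>A\<in>sets M. emeasure M ((\<lambda>x. g \<otimes>\<^bsub>G\<^esub> x) ` A) = emeasure M A) \<and>
     (\<forall>A\<in>sets M. emeasure M A = (INF U\<in>{U. openin T U \<and> A \<subseteq> U}. emeasure M U)) \<and>
     (\<forall>U. openin T U \<longrightarrow> emeasure M U = (SUP K\<in>{K. compactin T K \<and> K \<subseteq> U}. emeasure M K))"

text \<open>Commutators [x,y] = x^-1 y^-1 x y and left-normed iterated commutators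
[x_0, ..., x_k] = [[x_0, ..., x_(k-1)], x_k] (indices shifted to start at 0).\<close>

definition comm :: "('a, 'b) monoid_scheme \<Rightarrow> 'a \<Rightarrow> 'a \<Rightarrow> 'a" where
  "comm G x y = inv\<^bsub>G\<^esub> x \<otimes>\<^bsub>G\<^esub> inv\<^bsub>G\<^esub> y \<otimes>\<^bsub>G\<^esub> x \<otimes>\<^bsub>G\<^esub> y"

fun iter_comm :: "('a, 'b) monoid_scheme \<Rightarrow> (nat \<Rightarrow> 'a) \<Rightarrow> nat \<Rightarrow> 'a" where
  "iter_comm G x 0 = x 0"
| "iter_comm G x (Suc k) = comm G (iter_comm G x k) (x (Suc k))"

text \<open>The power X^(n+1) as a compact group (tuples indexed by {0..n}) with product topology.\<close>

definition pow_group :: "('a, 'b) monoid_scheme \<Rightarrow> nat \<Rightarrow> (nat \<Rightarrow> 'a) monoid" where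
  "pow_group G n = product_group {0..n} (\<lambda>_. G)"

definition pow_topology :: "'a topology \<Rightarrow> nat \<Rightarrow> (nat \<Rightarrow> 'a) topology" where
  "pow_topology T n = product_topology (\<lambda>_. T) {0..n}"

definition comm_degree :: "('a, 'b) monoid_scheme \<Rightarrow> nat \<Rightarrow> (nat \<Rightarrow> 'a) measure \<Rightarrow> real" where
  "comm_degree G n M =
     measure M {x \<in> carrier (pow_group G n). iter_comm G x n = \<one>\<^bsub>G\<^esub>}"

end

theory Submission
  imports Defs
begin


section \<open>Topological group basics\<close>

lemma tg_group: "topological_group G T \<Longrightarrow> group G"
  by (simp add: topological_group_def)
lemma tg_top: "topological_group G T \<Longrightarrow> topspace T = carrier G"
  by (simp add: topological_group_def)
lemma tg_mult: "topological_group G T \<Longrightarrow> continuous_map (prod_topology T T) T (\<lambda>(x, y). x \<otimes>\<^bsub>G\<^esub> y)"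
  by (simp add: topological_group_def)
lemma tg_invc: "topological_group G T \<Longrightarrow> continuous_map T T (\<lambda>x. inv\<^bsub>G\<^esub> x)"
  by (simp add: topological_group_def)

lemma tg_cont_mult:
  fixes G (structure)
  assumes "topological_group G T" "continuous_map Z T f" "continuous_map Z T g"
  shows "continuous_map Z T (\<lambda>z. f z \<otimes>\<^bsub>G\<^esub> g z)"
proof -
  have "continuous_map Z (prod_topology T T) (\<lambda>z. (f z, g z))"
    using assms by (simp add: continuous_map_paired)
  from continuous_map_compose[OF this tg_mult[OF assms(1)]] show ?thesis
    by (simp add: o_def)
qed

lemma tg_cont_inv:
  fixes G (structure)
  assumes "topological_group G T" "continuous_map Z T f"
  shows "continuous_map Z T (\<lambda>z. inv\<^bsub>G\<^esub> (f z))"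
  using continuous_map_compose[OF assms(2) tg_invc[OF assms(1)]] by (simp add: o_def)

lemma tg_cont_const:
  assumes "topological_group G T" "c \<in> carrier G"
  shows "continuous_map Z T (\<lambda>z. c)"
  using assms by (simp add: tg_top)

lemma tg_open_ltrans:
  fixes G (structure)
  assumes "topological_group G T" "openin T U" "h \<in> carrier G"
  shows "openin T ((\<lambda>x. h \<otimes>\<^bsub>G\<^esub> x) ` U)"
proof -
  interpret group G using tg_group[OF assms(1)] .
  have U: "U \<subseteq> carrier G" using openin_subset[OF assms(2)] tg_top[OF assms(1)] by simp
  have "continuous_map T T (\<lambda>x. inv h \<otimes> x)"
    by (intro tg_cont_mult[OF assms(1)] tg_cont_const[OF assms(1)] continuous_map_id[unfolded id_def])
       (use assms in auto)
  then have "openin T {x \<in> topspace T. inv h \<otimes> x \<in> U}"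
    using assms(2) openin_continuous_map_preimage by blast
  moreover have "{x \<in> topspace T. inv h \<otimes> x \<in> U} = (\<lambda>x. h \<otimes> x) ` U"
  proof safe
    fix x assume "x \<in> topspace T" "inv h \<otimes> x \<in> U"
    then show "x \<in> (\<lambda>x. h \<otimes> x) ` U"
      using assms(3) tg_top[OF assms(1)] by (intro image_eqI[of _ _ "inv h \<otimes> x"]) (auto simp: m_assoc[symmetric])
  next
    fix u assume "u \<in> U" then show "h \<otimes> u \<in> topspace T" "inv h \<otimes> (h \<otimes> u) \<in> U"
      using U assms(3) tg_top[OF assms(1)] by (auto simp: m_assoc[symmetric])
  qed
  ultimately show ?thesis by simp
qed

section \<open>Borel measures on topologies\<close>

definition borelM :: "'a topology \<Rightarrow> 'a measure \<Rightarrow> bool" where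
  "borelM TX M \<longleftrightarrow> space M = topspace TX \<and> sets M = sigma_sets (topspace TX) {U. openin TX U}"

lemma borelM_open: "borelM TX M \<Longrightarrow> openin TX U \<Longrightarrow> U \<in> sets M"
  unfolding borelM_def by auto

lemma borelM_closed: "borelM TX M \<Longrightarrow> closedin TX U \<Longrightarrow> U \<in> sets M"
proof -
  assume b: "borelM TX M" and c: "closedin TX U"
  then have "topspace TX - U \<in> sets M" by (intro borelM_open) auto
  then have "space M - (topspace TX - U) \<in> sets M" by auto
  moreover have "space M - (topspace TX - U) = U"
    using b c closedin_subset unfolding borelM_def by auto
  ultimately show ?thesis by simp
qed

lemma borelM_measurable:
  assumes "borelM TX M" "borelM TY M'" "continuous_map TX TY f"
  shows "f \<in> measurable M M'"
proof (rule measurable_sigma_sets)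
  show "sets M' = sigma_sets (topspace TY) {U. openin TY U}" using assms(2) by (simp add: borelM_def)
  show "{U. openin TY U} \<subseteq> Pow (topspace TY)" using openin_subset by auto
  show "f \<in> space M \<rightarrow> topspace TY" using assms(1,3) by (auto simp: borelM_def continuous_map_def)
  fix U assume "U \<in> {U. openin TY U}"
  then have "openin TX {x \<in> topspace TX. f x \<in> U}"
    using assms(3) openin_continuous_map_preimage by auto
  moreover have "f -` U \<inter> space M = {x \<in> topspace TX. f x \<in> U}" using assms(1) by (auto simp: borelM_def)
  ultimately show "f -` U \<inter> space M \<in> sets M" using borelM_open[OF assms(1)] by simp
qed

lemma borelM_borel:
  assumes "borelM TX M" "continuous_map TX euclideanreal f"
  shows "f \<in> borel_measurable M"
proof (rule borel_measurableI)
  fix S :: "real set" assume "open S"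
  then have "openin TX {x \<in> topspace TX. f x \<in> S}"
    using openin_continuous_map_preimage[OF assms(2), of S] \<open>open S\<close> by (metis open_openin)
  moreover have "f -` S \<inter> space M = {x \<in> topspace TX. f x \<in> S}" using assms(1) by (auto simp: borelM_def)
  ultimately show "f -` S \<inter> space M \<in> sets M" using borelM_open[OF assms(1)] by simp
qed

definition linv_prob :: "('a, 'b) monoid_scheme \<Rightarrow> 'a topology \<Rightarrow> 'a measure \<Rightarrow> bool" where
  "linv_prob G T M \<longleftrightarrow> borelM T M \<and> emeasure M (topspace T) = 1 \<and>
     (\<forall>g\<in>carrier G. \<forall>A\<in>sets M. emeasure M ((\<lambda>x. g \<otimes>\<^bsub>G\<^esub> x) ` A) = emeasure M A)"

lemma haar_linv: "haar_measure G T M \<Longrightarrow> linv_prob G T M"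
  by (simp add: haar_measure_def linv_prob_def borelM_def)

lemma linv_prob_space: "linv_prob G T M \<Longrightarrow> emeasure M (space M) = 1"
  by (simp add: linv_prob_def borelM_def)

lemma linv_finite: "linv_prob G T M \<Longrightarrow> finite_measure M"
  by (rule finite_measureI) (simp add: linv_prob_def borelM_def)

lemma linv_integral:
  fixes G (structure) and \<phi> :: "'a \<Rightarrow> real"
  assumes tg: "topological_group G T" and L: "linv_prob G T M" and c: "c \<in> carrier G"
    and phi: "\<phi> \<in> borel_measurable M"
  shows "(\<integral>x. \<phi> (c \<otimes> x) \<partial>M) = integral\<^sup>L M \<phi>"
proof -
  interpret group G using tg_group[OF tg] .
  have b: "borelM T M" using L by (simp add: linv_prob_def)
  have sp: "space M = carrier G" using b tg_top[OF tg] by (simp add: borelM_def)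
  have cm: "continuous_map T T (\<lambda>x. c \<otimes> x)"
    by (intro tg_cont_mult[OF tg] tg_cont_const[OF tg] continuous_map_id[unfolded id_def]) (use c in auto)
  have meas: "(\<lambda>x. c \<otimes> x) \<in> measurable M M" using borelM_measurable[OF b b cm] .
  have "distr M M (\<lambda>x. c \<otimes> x) = M"
  proof (rule measure_eqI)
    show "sets (distr M M (\<lambda>x. c \<otimes> x)) = sets M" by simp
    fix A assume A: "A \<in> sets (distr M M (\<lambda>x. c \<otimes> x))"
    then have A': "A \<in> sets M" by simp
    then have Asub: "A \<subseteq> carrier G" using sets.sets_into_space sp by blast
    have pre: "(\<lambda>x. c \<otimes> x) -` A \<inter> space M = (\<lambda>x. inv c \<otimes> x) ` A"
    proof (intro equalityI subsetI)
      fix x assume x: "x \<in> (\<lambda>x. c \<otimes> x) -` A \<inter> space M"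
      then have xc: "x \<in> carrier G" and cx: "c \<otimes> x \<in> A" using sp by auto
      have "inv c \<otimes> (c \<otimes> x) = x" using xc c by (simp add: m_assoc[symmetric])
      then show "x \<in> (\<lambda>x. inv c \<otimes> x) ` A"
        using cx by (intro image_eqI[of _ _ "c \<otimes> x"]) auto
    next
      fix x assume "x \<in> (\<lambda>x. inv c \<otimes> x) ` A"
      then obtain a where a: "a \<in> A" "x = inv c \<otimes> a" by auto
      have ac: "a \<in> carrier G" using a Asub by auto
      have "c \<otimes> x = a" using a ac c by (simp add: m_assoc[symmetric])
      moreover have "x \<in> space M" using a ac c sp by simp
      ultimately show "x \<in> (\<lambda>x. c \<otimes> x) -` A \<inter> space M" using a by simp
    qed
    have inv: "emeasure M ((\<lambda>x. inv c \<otimes> x) ` A) = emeasure M A"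
      using L A' inv_closed[OF c] unfolding linv_prob_def by blast
    have ed: "emeasure (distr M M (\<lambda>x. c \<otimes> x)) A = emeasure M ((\<lambda>x. c \<otimes> x) -` A \<inter> space M)"
      using meas A' by (rule emeasure_distr)
    show "emeasure (distr M M (\<lambda>x. c \<otimes> x)) A = emeasure M A"
      unfolding ed pre inv ..
  qed
  then have "integral\<^sup>L M \<phi> = integral\<^sup>L (distr M M (\<lambda>x. c \<otimes> x)) \<phi>" by simp
  also have "\<dots> = (\<integral>x. \<phi> (c \<otimes> x) \<partial>M)" using integral_distr[OF meas phi] .
  finally show ?thesis by simp
qed

section \<open>Fubini for equicontinuous integrands\<close>

fun approxF :: "('a \<Rightarrow> 'a set) \<Rightarrow> ('a \<Rightarrow> 'c \<Rightarrow> real) \<Rightarrow> 'a list \<Rightarrow> 'a \<Rightarrow> 'c \<Rightarrow> real" where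
  "approxF V F [] x y = 0"
| "approxF V F (p # ps) x y = (if x \<in> V p then F p y else approxF V F ps x y)"

lemma approxF_sel:
  "x \<in> \<Union>(V ` set ps) \<Longrightarrow> \<exists>p\<in>set ps. x \<in> V p \<and> approxF V F ps x y = F p y"
  by (induction ps) auto

lemma approxF_meas:
  assumes "\<And>p. p \<in> set ps \<Longrightarrow> V p \<in> sets M"
    and "\<And>p. p \<in> set ps \<Longrightarrow> F p \<in> borel_measurable N"
  shows "(\<lambda>z. approxF V F ps (fst z) (snd z)) \<in> borel_measurable (M \<Otimes>\<^sub>M N)"
  using assms
proof (induction ps)
  case Nil
  then show ?case by simp
next
  case (Cons p ps)
  have s: "{z \<in> space (M \<Otimes>\<^sub>M N). fst z \<in> V p} = V p \<times> space N"
    using Cons.prems(1)[of p] sets.sets_into_space by (force simp: space_pair_measure)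
  have "(\<lambda>z. F p (snd z)) \<in> borel_measurable (M \<Otimes>\<^sub>M N)"
    using measurable_compose[OF measurable_snd Cons.prems(2)[of p]] by simp
  moreover have "(\<lambda>z. approxF V F ps (fst z) (snd z)) \<in> borel_measurable (M \<Otimes>\<^sub>M N)"
    using Cons by auto
  moreover have "{z \<in> space (M \<Otimes>\<^sub>M N). fst z \<in> V p} \<in> sets (M \<Otimes>\<^sub>M N)"
    unfolding s using Cons.prems(1)[of p] by auto
  ultimately show ?case
    by (simp only: approxF.simps) (rule measurable_If)
qed

lemma fubini_equicont:
  fixes F :: "'a \<Rightarrow> 'c \<Rightarrow> real"
  assumes bK: "borelM TK M" and cK: "compact_space TK" and fM: "finite_measure M"
    and fN: "finite_measure N"
    and meas: "\<And>x. x \<in> topspace TK \<Longrightarrow> F x \<in> borel_measurable N"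
    and bound: "\<And>x y. x \<in> topspace TK \<Longrightarrow> y \<in> space N \<Longrightarrow> \<bar>F x y\<bar> \<le> B"
    and eq: "\<And>x0 e. x0 \<in> topspace TK \<Longrightarrow> e > 0 \<Longrightarrow>
       \<exists>V. openin TK V \<and> x0 \<in> V \<and> (\<forall>x\<in>V. \<forall>y\<in>space N. \<bar>F x y - F x0 y\<bar> < e)"
  shows "(\<integral>y. (\<integral>x. F x y \<partial>M) \<partial>N) = (\<integral>x. (\<integral>y. F x y \<partial>N) \<partial>M)"
proof -
  interpret M: finite_measure M by fact
  interpret N: finite_measure N by fact
  interpret P: pair_sigma_finite M N ..
  interpret PF: finite_measure "M \<Otimes>\<^sub>M N"
    using finite_measure_pair_measure[OF fN fM] .
  have spM: "space M = topspace TK" using bK by (simp add: borelM_def)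
  define Good where "Good m V ps \<longleftrightarrow> (\<forall>p\<in>set ps. openin TK (V p) \<and> p \<in> topspace TK) \<and>
      topspace TK \<subseteq> \<Union>(V ` set ps) \<and>
      (\<forall>p\<in>set ps. \<forall>x\<in>V p. \<forall>y\<in>space N. \<bar>F x y - F p y\<bar> < inverse (real (Suc m)))"
    for m :: nat and V :: "'a \<Rightarrow> 'a set" and ps
  have approx: "\<exists>V ps. Good m V ps" for m
  proof -
    have "\<forall>x0\<in>topspace TK. \<exists>V. openin TK V \<and> x0 \<in> V \<and>
            (\<forall>x\<in>V. \<forall>y\<in>space N. \<bar>F x y - F x0 y\<bar> < inverse (real (Suc m)))"
      using eq by simp
    then obtain V where V': "\<forall>x0\<in>topspace TK. openin TK (V x0) \<and> x0 \<in> V x0 \<and>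
            (\<forall>x\<in>V x0. \<forall>y\<in>space N. \<bar>F x y - F x0 y\<bar> < inverse (real (Suc m)))"
      by (rule bchoice[THEN exE])
    then have V: "\<And>x0. x0 \<in> topspace TK \<Longrightarrow> openin TK (V x0) \<and> x0 \<in> V x0 \<and>
            (\<forall>x\<in>V x0. \<forall>y\<in>space N. \<bar>F x y - F x0 y\<bar> < inverse (real (Suc m)))"
      by blast
    have "\<exists>\<F>. finite \<F> \<and> \<F> \<subseteq> V ` topspace TK \<and> topspace TK \<subseteq> \<Union>\<F>"
      using cK unfolding compact_space_alt
      by (elim allE[of _ "V ` topspace TK"]) (use V in blast)
    then obtain \<F> where F: "finite \<F>" "\<F> \<subseteq> V ` topspace TK" "topspace TK \<subseteq> \<Union>\<F>" by blast
    then obtain D where D: "D \<subseteq> topspace TK" "finite D" "\<F> = V ` D"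
      using finite_subset_image[OF F(1) F(2)] by blast
    obtain ps where ps: "set ps = D" using finite_list[OF D(2)] by blast
    have "Good m V ps" unfolding Good_def
    proof (intro conjI)
      show "\<forall>p\<in>set ps. openin TK (V p) \<and> p \<in> topspace TK"
        using V D(1) ps by auto
      show "topspace TK \<subseteq> \<Union>(V ` set ps)" using F(3) D(3) ps by simp
      show "\<forall>p\<in>set ps. \<forall>x\<in>V p. \<forall>y\<in>space N. \<bar>F x y - F p y\<bar> < inverse (real (Suc m))"
        using V D(1) ps by auto
    qed
    then show ?thesis by blast
  qed
  then obtain Vs where "\<And>m. \<exists>ps. Good m (Vs m) ps" by metis
  then obtain pss where "\<And>m. Good m (Vs m) (pss m)" by metis
  then have VP: "\<And>m. (\<forall>p\<in>set (pss m). openin TK (Vs m p) \<and> p \<in> topspace TK) \<and>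
      topspace TK \<subseteq> \<Union>(Vs m ` set (pss m)) \<and>
      (\<forall>p\<in>set (pss m). \<forall>x\<in>Vs m p. \<forall>y\<in>space N. \<bar>F x y - F p y\<bar> < inverse (real (Suc m)))"
    unfolding Good_def by blast
  define f where "f m = (\<lambda>z. approxF (Vs m) F (pss m) (fst z) (snd z))" for m
  have fm: "f m \<in> borel_measurable (M \<Otimes>\<^sub>M N)" for m
    unfolding f_def
    by (rule approxF_meas) (use VP borelM_open[OF bK] meas in auto)
  have lim: "(\<lambda>m. f m z) \<longlonglongrightarrow> case_prod F z" if z: "z \<in> space (M \<Otimes>\<^sub>M N)" for z
  proof -
    obtain x y where xy: "z = (x, y)" "x \<in> topspace TK" "y \<in> space N"
      using z spM by (cases z) (auto simp: space_pair_measure)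
    have close: "\<bar>f m z - F x y\<bar> < inverse (real (Suc m))" for m
    proof -
      obtain p where p: "p \<in> set (pss m)" "x \<in> Vs m p" "approxF (Vs m) F (pss m) x y = F p y"
        using approxF_sel[of x "Vs m" "pss m" F y] VP[of m] xy by blast
      have "\<bar>F x y - F p y\<bar> < inverse (real (Suc m))" using VP[of m] p xy by blast
      then show ?thesis using p xy by (simp add: f_def abs_minus_commute)
    qed
    show ?thesis
      unfolding lim_sequentially
    proof (intro allI impI)
      fix r :: real assume "r > 0"
      then obtain n where n: "inverse (real (Suc n)) < r" using reals_Archimedean by blast
      show "\<exists>no. \<forall>m\<ge>no. dist (f m z) (case_prod F z) < r"
      proof (intro exI allI impI)
        fix m assume "n \<le> m"
        then have i: "inverse (real (Suc m)) \<le> inverse (real (Suc n))"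
          by (simp add: le_imp_inverse_le)
        have "dist (f m z) (case_prod F z) = \<bar>f m z - F x y\<bar>" using xy by (simp add: dist_real_def)
        then show "dist (f m z) (case_prod F z) < r"
          using close[of m] n i by linarith
      qed
    qed
  qed
  have Fm: "case_prod F \<in> borel_measurable (M \<Otimes>\<^sub>M N)"
    by (rule borel_measurable_LIMSEQ_metric[OF fm lim])
  have "integrable (M \<Otimes>\<^sub>M N) (case_prod F)"
  proof (rule PF.integrable_const_bound[where B=B])
    show "AE z in M \<Otimes>\<^sub>M N. norm (case_prod F z) \<le> B"
      by (rule AE_I2) (use bound spM in \<open>auto simp: space_pair_measure\<close>)
  qed (fact Fm)
  then show ?thesis by (rule P.Fubini_integral)
qed

section \<open>Uniform equicontinuity of translates\<close>

lemma equicont_translate: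
  fixes G (structure) and h :: "'a \<Rightarrow> real"
  assumes tg: "topological_group G T" and cT: "compact_space T"
    and h: "continuous_map T euclideanreal h"
    and x0: "x0 \<in> carrier G" and e: "e > 0"
  shows "\<exists>V. openin T V \<and> x0 \<in> V \<and> (\<forall>x\<in>V. \<forall>g\<in>carrier G. \<bar>h (inv x \<otimes> g) - h (inv x0 \<otimes> g)\<bar> < e)"
proof -
  interpret group G using tg_group[OF tg] .
  have top: "topspace T = carrier G" using tg_top[OF tg] .
  define \<Phi> where "\<Phi> z = \<bar>h (inv (fst z) \<otimes> snd z) - h (inv x0 \<otimes> snd z)\<bar>" for z
  have c1: "continuous_map (prod_topology T T) T (\<lambda>z. inv (fst z) \<otimes> snd z)"
    by (intro tg_cont_mult[OF tg] tg_cont_inv[OF tg] continuous_map_fst continuous_map_snd)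
  have c2: "continuous_map (prod_topology T T) T (\<lambda>z. inv x0 \<otimes> snd z)"
    by (intro tg_cont_mult[OF tg] tg_cont_const[OF tg] continuous_map_snd) (use x0 in simp)
  have "continuous_map (prod_topology T T) euclideanreal \<Phi>"
    unfolding \<Phi>_def
    by (intro continuous_map_real_abs continuous_map_diff continuous_map_compose[OF c1 h, unfolded o_def]
          continuous_map_compose[OF c2 h, unfolded o_def])
  then have W: "openin (prod_topology T T) {z \<in> topspace (prod_topology T T). \<Phi> z \<in> {..<e}}"
    using openin_continuous_map_preimage[of _ _ \<Phi> "{..<e}"] by (metis open_lessThan open_openin)
  have sub: "{x0} \<times> topspace T \<subseteq> {z \<in> topspace (prod_topology T T). \<Phi> z \<in> {..<e}}"
    using x0 top e by (auto simp: \<Phi>_def)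
  have C: "compactin T (topspace T)" using cT by (simp add: compact_space_def)
  obtain U V where UV: "openin T U" "openin T V" "x0 \<in> U" "topspace T \<subseteq> V"
      "U \<times> V \<subseteq> {z \<in> topspace (prod_topology T T). \<Phi> z \<in> {..<e}}"
    using tube_lemma_right[OF W C _ sub] x0 top by blast
  show ?thesis
  proof (intro exI conjI ballI)
    show "openin T U" "x0 \<in> U" by fact+
    fix x g assume "x \<in> U" "g \<in> carrier G"
    then have "(x, g) \<in> U \<times> V" using UV(4) top by auto
    then show "\<bar>h (inv x \<otimes> g) - h (inv x0 \<otimes> g)\<bar> < e"
      using UV(5) by (auto simp: \<Phi>_def)
  qed
qed

section \<open>Comparison of integrals\<close>

lemma linv_measure_space: "linv_prob G T M \<Longrightarrow> measure M (space M) = 1"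
  by (simp add: linv_prob_def borelM_def measure_def)

lemma push_integral:
  fixes K (structure) and Q :: "('q, 'r) monoid_scheme" and f :: "'q \<Rightarrow> real"
  assumes tgK: "topological_group K TK" and cK: "compact_space TK" and LK: "linv_prob K TK \<mu>"
    and tgQ: "topological_group Q TQ" and LQ: "linv_prob Q TQ \<nu>"
    and hom: "\<pi> \<in> hom K Q" and surj: "\<pi> ` carrier K = carrier Q"
    and cpi: "continuous_map TK TQ \<pi>"
    and f: "continuous_map TQ euclideanreal f" and bound: "\<And>y. y \<in> carrier Q \<Longrightarrow> \<bar>f y\<bar> \<le> B"
  shows "integral\<^sup>L \<nu> f = (\<integral>x. f (\<pi> (inv x)) \<partial>\<mu>)"
proof -
  interpret K: group K using tg_group[OF tgK] .
  interpret Q: group Q using tg_group[OF tgQ] .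
  interpret H: group_hom K Q \<pi> by unfold_locales (fact hom)
  have topK: "topspace TK = carrier K" using tg_top[OF tgK] .
  have topQ: "topspace TQ = carrier Q" using tg_top[OF tgQ] .
  have bK: "borelM TK \<mu>" and bQ: "borelM TQ \<nu>" using LK LQ by (auto simp: linv_prob_def)
  have spK: "space \<mu> = carrier K" and spQ: "space \<nu> = carrier Q"
    using bK bQ topK topQ by (auto simp: borelM_def)
  define F where "F x y = f (inv\<^bsub>Q\<^esub> (\<pi> x) \<otimes>\<^bsub>Q\<^esub> y)" for x y
  define \<psi> where "\<psi> z = f (\<pi> (inv z))" for z
  have cont_ltrans: "continuous_map TQ euclideanreal (\<lambda>y. f (c \<otimes>\<^bsub>Q\<^esub> y))" if "c \<in> carrier Q" for c
  proof -
    have "continuous_map TQ TQ (\<lambda>y. c \<otimes>\<^bsub>Q\<^esub> y)"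
      by (intro tg_cont_mult[OF tgQ] tg_cont_const[OF tgQ] continuous_map_id[unfolded id_def]) (use that in auto)
    from continuous_map_compose[OF this f] show ?thesis by (simp add: o_def)
  qed
  have cpsi: "continuous_map TK euclideanreal \<psi>"
  proof -
    have "continuous_map TK TK (\<lambda>z. inv z)"
      by (intro tg_cont_inv[OF tgK] continuous_map_id[unfolded id_def])
    from continuous_map_compose[OF continuous_map_compose[OF this cpi] f] show ?thesis
      unfolding \<psi>_def[abs_def] by (simp add: o_def)
  qed
  have Fpi: "F x (\<pi> g) = f (\<pi> (inv x \<otimes> g))" if "x \<in> carrier K" "g \<in> carrier K" for x g
    using that by (simp add: F_def)
  have fub: "(\<integral>y. (\<integral>x. F x y \<partial>\<mu>) \<partial>\<nu>) = (\<integral>x. (\<integral>y. F x y \<partial>\<nu>) \<partial>\<mu>)"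
  proof (rule fubini_equicont[OF bK cK linv_finite[OF LK] linv_finite[OF LQ]])
    fix x assume "x \<in> topspace TK"
    then show "F x \<in> borel_measurable \<nu>"
      unfolding F_def using topK by (intro borelM_borel[OF bQ] cont_ltrans) auto
  next
    fix x y assume "x \<in> topspace TK" "y \<in> space \<nu>"
    then show "\<bar>F x y\<bar> \<le> B" unfolding F_def using topK spQ by (intro bound) auto
  next
    fix x0 and e :: real assume x0: "x0 \<in> topspace TK" and e: "e > 0"
    have h: "continuous_map TK euclideanreal (\<lambda>z. f (\<pi> z))"
      using continuous_map_compose[OF cpi f] by (simp add: o_def)
    obtain V where V: "openin TK V" "x0 \<in> V"
      "\<forall>x\<in>V. \<forall>g\<in>carrier K. \<bar>f (\<pi> (inv x \<otimes> g)) - f (\<pi> (inv x0 \<otimes> g))\<bar> < e"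
      using equicont_translate[OF tgK cK h _ e, of x0] x0 topK by blast
    show "\<exists>V. openin TK V \<and> x0 \<in> V \<and> (\<forall>x\<in>V. \<forall>y\<in>space \<nu>. \<bar>F x y - F x0 y\<bar> < e)"
    proof (intro exI conjI ballI)
      show "openin TK V" "x0 \<in> V" by fact+
      fix x y assume x: "x \<in> V" and y: "y \<in> space \<nu>"
      obtain g where g: "g \<in> carrier K" "y = \<pi> g" using y spQ surj by auto
      have xK: "x \<in> carrier K" using x openin_subset[OF V(1)] topK by auto
      have x0K: "x0 \<in> carrier K" using x0 topK by simp
      have "\<bar>f (\<pi> (inv x \<otimes> g)) - f (\<pi> (inv x0 \<otimes> g))\<bar> < e" using V(3) x g(1) by blast
      then show "\<bar>F x y - F x0 y\<bar> < e"
        unfolding g(2) Fpi[OF xK g(1)] Fpi[OF x0K g(1)] .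
    qed
  qed
  have rhs: "(\<integral>x. (\<integral>y. F x y \<partial>\<nu>) \<partial>\<mu>) = integral\<^sup>L \<nu> f"
  proof -
    have "(\<integral>x. (\<integral>y. F x y \<partial>\<nu>) \<partial>\<mu>) = (\<integral>x. integral\<^sup>L \<nu> f \<partial>\<mu>)"
    proof (rule Bochner_Integration.integral_cong[OF refl])
      fix x assume "x \<in> space \<mu>"
      then have c: "inv\<^bsub>Q\<^esub> (\<pi> x) \<in> carrier Q" using spK by simp
      show "(\<integral>y. F x y \<partial>\<nu>) = integral\<^sup>L \<nu> f"
        unfolding F_def
        by (rule linv_integral[OF tgQ LQ c borelM_borel[OF bQ f]])
    qed
    also have "\<dots> = integral\<^sup>L \<nu> f" using linv_measure_space[OF LK] by simp
    finally show ?thesis .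
  qed
  have lhs: "(\<integral>y. (\<integral>x. F x y \<partial>\<mu>) \<partial>\<nu>) = integral\<^sup>L \<mu> \<psi>"
  proof -
    have "(\<integral>y. (\<integral>x. F x y \<partial>\<mu>) \<partial>\<nu>) = (\<integral>y. integral\<^sup>L \<mu> \<psi> \<partial>\<nu>)"
    proof (rule Bochner_Integration.integral_cong[OF refl])
      fix y assume "y \<in> space \<nu>"
      then obtain g where g: "g \<in> carrier K" "y = \<pi> g" using spQ surj by auto
      have "(\<integral>x. F x y \<partial>\<mu>) = (\<integral>x. \<psi> (inv g \<otimes> x) \<partial>\<mu>)"
      proof (rule Bochner_Integration.integral_cong[OF refl])
        fix x assume "x \<in> space \<mu>"
        then have x: "x \<in> carrier K" using spK by simp
        have "inv (inv g \<otimes> x) = inv x \<otimes> g" using x g by (simp add: K.inv_mult_group)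
        then show "F x y = \<psi> (inv g \<otimes> x)" using x g by (simp add: Fpi \<psi>_def)
      qed
      also have "\<dots> = integral\<^sup>L \<mu> \<psi>"
        by (rule linv_integral[OF tgK LK _ borelM_borel[OF bK cpsi]]) (use g in simp)
      finally show "(\<integral>x. F x y \<partial>\<mu>) = integral\<^sup>L \<mu> \<psi>" .
    qed
    also have "\<dots> = integral\<^sup>L \<mu> \<psi>" using linv_measure_space[OF LQ] by simp
    finally show ?thesis .
  qed
  have "integral\<^sup>L \<mu> \<psi> = integral\<^sup>L \<nu> f" using fub lhs rhs by simp
  then show ?thesis unfolding \<psi>_def by simp
qed

lemma push_integral2:
  fixes K (structure) and Q :: "('q, 'r) monoid_scheme" and f :: "'q \<Rightarrow> real"
  assumes tgK: "topological_group K TK" and cK: "compact_space TK" and LK: "linv_prob K TK \<mu>"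
    and tgQ: "topological_group Q TQ" and LQ: "linv_prob Q TQ \<nu>"
    and hom: "\<pi> \<in> hom K Q" and surj: "\<pi> ` carrier K = carrier Q"
    and cpi: "continuous_map TK TQ \<pi>"
    and f: "continuous_map TQ euclideanreal f" and bound: "\<And>y. y \<in> carrier Q \<Longrightarrow> \<bar>f y\<bar> \<le> B"
  shows "integral\<^sup>L \<nu> f = (\<integral>x. f (\<pi> x) \<partial>\<mu>)"
proof -
  interpret K: group K using tg_group[OF tgK] .
  have idh: "(\<lambda>x. x) \<in> hom K K" using id_iso[of K] by (simp add: iso_def id_def)
  have h: "continuous_map TK euclideanreal (\<lambda>z. f (\<pi> z))"
    using continuous_map_compose[OF cpi f] by (simp add: o_def)
  have hb: "\<bar>f (\<pi> y)\<bar> \<le> B" if "y \<in> carrier K" for y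
    using that surj bound by blast
  have "(\<integral>x. f (\<pi> x) \<partial>\<mu>) = (\<integral>x. f (\<pi> (inv x)) \<partial>\<mu>)"
    using push_integral[OF tgK cK LK tgK LK idh _ continuous_map_id[unfolded id_def] h hb] by simp
  also have "\<dots> = integral\<^sup>L \<nu> f"
    using push_integral[OF tgK cK LK tgQ LQ hom surj cpi f bound] by simp
  finally show ?thesis by simp
qed

lemma measure_compare:
  fixes K (structure) and Q :: "('q, 'r) monoid_scheme"
  assumes tgK: "topological_group K TK" and cK: "compact_space TK" and LK: "linv_prob K TK \<mu>"
    and tgQ: "topological_group Q TQ" and LQ: "linv_prob Q TQ \<nu>" and nQ: "normal_space TQ"
    and outer: "\<forall>A\<in>sets \<nu>. emeasure \<nu> A = (INF U\<in>{U. openin TQ U \<and> A \<subseteq> U}. emeasure \<nu> U)"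
    and hom: "\<pi> \<in> hom K Q" and surj: "\<pi> ` carrier K = carrier Q"
    and cpi: "continuous_map TK TQ \<pi>"
    and D: "closedin TQ D" and C: "\<And>x. x \<in> C \<Longrightarrow> x \<in> carrier K \<and> \<pi> x \<in> D"
  shows "measure \<mu> C \<le> measure \<nu> D"
proof (cases "C \<in> sets \<mu>")
  case False
  then show ?thesis by (simp add: measure_notin_sets)
next
  case Cm: True
  interpret M: finite_measure \<mu> using linv_finite[OF LK] .
  interpret N: finite_measure \<nu> using linv_finite[OF LQ] .
  have topK: "topspace TK = carrier K" using tg_top[OF tgK] .
  have topQ: "topspace TQ = carrier Q" using tg_top[OF tgQ] .
  have bK: "borelM TK \<mu>" and bQ: "borelM TQ \<nu>" using LK LQ by (auto simp: linv_prob_def)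
  have spK: "space \<mu> = carrier K" and spQ: "space \<nu> = carrier Q"
    using bK bQ topK topQ by (auto simp: borelM_def)
  have Dm: "D \<in> sets \<nu>" using borelM_closed[OF bQ D] .
  show ?thesis
  proof (rule field_le_epsilon)
    fix e :: real assume e: "0 < e"
    have "emeasure \<nu> D < emeasure \<nu> D + ennreal e"
      using e N.emeasure_eq_measure by (simp add: ennreal_add_left_cancel_less)
    then have "(INF U\<in>{U. openin TQ U \<and> D \<subseteq> U}. emeasure \<nu> U) < emeasure \<nu> D + ennreal e"
      using outer Dm by simp
    then obtain U where U: "openin TQ U" "D \<subseteq> U" "emeasure \<nu> U < emeasure \<nu> D + ennreal e"
      unfolding INF_less_iff by blast
    have pl: "ennreal (measure \<nu> D + e) = ennreal (measure \<nu> D) + ennreal e"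
      using e by (intro ennreal_plus) auto
    have "ennreal (measure \<nu> U) < ennreal (measure \<nu> D + e)"
      using U(3) unfolding pl N.emeasure_eq_measure .
    then have mU: "measure \<nu> U < measure \<nu> D + e"
      by (simp add: ennreal_less_iff)
    have Um: "U \<in> sets \<nu>" using borelM_open[OF bQ U(1)] .
    have "closedin TQ (topspace TQ - U)" using U(1) by blast
    moreover have "disjnt (topspace TQ - U) D" using U(2) by (auto simp: disjnt_def)
    ultimately obtain f where f: "continuous_map TQ (top_of_set {0..1::real}) f"
        "f ` (topspace TQ - U) \<subseteq> {0}" "f ` D \<subseteq> {1}"
      using Urysohn_lemma[OF nQ _ D, of "topspace TQ - U" 0 1] by auto
    have fc: "continuous_map TQ euclideanreal f"
      using f(1) continuous_map_in_subtopology by blast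
    have f01: "f y \<in> {0..1}" if "y \<in> carrier Q" for y
      using f(1) that topQ by (auto simp: continuous_map_def)
    have fb: "\<bar>f y\<bar> \<le> 1" if "y \<in> carrier Q" for y using f01[OF that] by auto
    have fmeas: "f \<in> borel_measurable \<nu>" using borelM_borel[OF bQ fc] .
    have fpmeas: "(\<lambda>x. f (\<pi> x)) \<in> borel_measurable \<mu>"
      using borelM_borel[OF bK continuous_map_compose[OF cpi fc]] by (simp add: o_def)
    have "measure \<mu> C = (\<integral>x. indicator C x \<partial>\<mu>)" using Cm sets.sets_into_space[OF Cm]
      by (simp add: Int_absorb2)
    also have "\<dots> \<le> (\<integral>x. f (\<pi> x) \<partial>\<mu>)"
    proof (rule integral_mono)
      show "integrable \<mu> (indicator C :: _ \<Rightarrow> real)"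
        using Cm by (intro integrable_real_indicator) (auto simp: M.emeasure_eq_measure)
      show "integrable \<mu> (\<lambda>x. f (\<pi> x))"
      proof (rule M.integrable_const_bound[where B=1])
        show "AE x in \<mu>. norm (f (\<pi> x)) \<le> 1"
          by (rule AE_I2) (use fb surj spK in auto)
      qed (fact fpmeas)
      fix x assume x: "x \<in> space \<mu>"
      show "indicator C x \<le> f (\<pi> x)"
      proof (cases "x \<in> C")
        case True
        then have "f (\<pi> x) = 1" using C f(3) by blast
        then show ?thesis using True by simp
      next
        case False
        have "\<pi> x \<in> carrier Q" using x spK surj by blast
        then show ?thesis using False f01 by simp
      qed
    qed
    also have "\<dots> = integral\<^sup>L \<nu> f"
      using push_integral2[OF tgK cK LK tgQ LQ hom surj cpi fc fb] by simp
    also have "\<dots> \<le> (\<integral>y. indicator U y \<partial>\<nu>)"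
    proof (rule integral_mono)
      show "integrable \<nu> (indicator U :: _ \<Rightarrow> real)"
        using Um by (intro integrable_real_indicator) (auto simp: N.emeasure_eq_measure)
      show "integrable \<nu> f"
      proof (rule N.integrable_const_bound[where B=1])
        show "AE x in \<nu>. norm (f x) \<le> 1"
          by (rule AE_I2) (use fb spQ in auto)
      qed (fact fmeas)
      fix y assume y: "y \<in> space \<nu>"
      show "f y \<le> indicator U y"
      proof (cases "y \<in> U")
        case True then show ?thesis using f01 y spQ by simp
      next
        case False
        then have "f y = 0" using f(2) y spQ topQ by blast
        then show ?thesis using False by simp
      qed
    qed
    also have "\<dots> = measure \<nu> U" using Um sets.sets_into_space[OF Um]
      by (simp add: Int_absorb2)
    finally show "measure \<mu> C \<le> measure \<nu> D + e" using mU by simp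
  qed
qed

section \<open>Powers of topological groups\<close>

lemma pow_tg:
  assumes tg: "topological_group G T"
  shows "topological_group (pow_group G n) (pow_topology T n)"
proof -
  have grp: "group G" using tg_group[OF tg] .
  have top: "topspace T = carrier G" using tg_top[OF tg] .
  let ?P = "pow_topology T n"
  have topP: "topspace ?P = carrier (pow_group G n)"
    by (simp add: pow_topology_def pow_group_def top)
  have mc: "continuous_map (prod_topology ?P ?P) ?P (\<lambda>(x, y). x \<otimes>\<^bsub>pow_group G n\<^esub> y)"
    unfolding pow_topology_def
  proof (subst continuous_map_componentwise, intro conjI ballI)
    show "(\<lambda>(x, y). x \<otimes>\<^bsub>pow_group G n\<^esub> y) ` topspace (prod_topology (product_topology (\<lambda>_. T) {0..n}) (product_topology (\<lambda>_. T) {0..n})) \<subseteq> extensional {0..n}"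
      by (auto simp: pow_group_def)
    fix k assume k: "k \<in> {0..n}"
    have "continuous_map (prod_topology (product_topology (\<lambda>_. T) {0..n}) (product_topology (\<lambda>_. T) {0..n})) T
        (\<lambda>z. fst z k \<otimes>\<^bsub>G\<^esub> snd z k)"
      by (intro tg_cont_mult[OF tg] continuous_map_compose[OF continuous_map_fst continuous_map_product_projection[OF k], unfolded o_def]
          continuous_map_compose[OF continuous_map_snd continuous_map_product_projection[OF k], unfolded o_def])
    then show "continuous_map (prod_topology (product_topology (\<lambda>_. T) {0..n}) (product_topology (\<lambda>_. T) {0..n})) T
        (\<lambda>z. (case z of (x, y) \<Rightarrow> x \<otimes>\<^bsub>pow_group G n\<^esub> y) k)"
      using k by (simp add: pow_group_def case_prod_beta)
  qed
  have ic0: "continuous_map ?P ?P (\<lambda>x. \<lambda>i\<in>{0..n}. inv\<^bsub>G\<^esub> (x i))"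
    unfolding pow_topology_def
  proof (subst continuous_map_componentwise, intro conjI ballI)
    show "(\<lambda>x. \<lambda>i\<in>{0..n}. inv\<^bsub>G\<^esub> (x i)) ` topspace (product_topology (\<lambda>_. T) {0..n}) \<subseteq> extensional {0..n}"
      by auto
    fix k assume k: "k \<in> {0..n}"
    have "continuous_map (product_topology (\<lambda>_. T) {0..n}) T (\<lambda>x. inv\<^bsub>G\<^esub> (x k))"
      by (intro tg_cont_inv[OF tg] continuous_map_product_projection[OF k])
    then show "continuous_map (product_topology (\<lambda>_. T) {0..n}) T (\<lambda>x. (\<lambda>i\<in>{0..n}. inv\<^bsub>G\<^esub> (x i)) k)"
      using k by simp
  qed
  have ic: "continuous_map ?P ?P (\<lambda>x. inv\<^bsub>pow_group G n\<^esub> x)"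
  proof (rule continuous_map_eq[OF ic0])
    fix x assume "x \<in> topspace ?P"
    then show "(\<lambda>i\<in>{0..n}. inv\<^bsub>G\<^esub> (x i)) = inv\<^bsub>pow_group G n\<^esub> x"
      using topP grp by (simp add: pow_group_def)
  qed
  show ?thesis unfolding topological_group_def
    using grp topP mc ic by (simp add: pow_group_def)
qed

lemma pow_compact: "compact_space T \<Longrightarrow> compact_space (pow_topology T n)"
  by (simp add: pow_topology_def compact_space_product_topology)

lemma pow_Hausdorff: "Hausdorff_space T \<Longrightarrow> Hausdorff_space (pow_topology T n)"
  by (simp add: pow_topology_def Hausdorff_space_product_topology)

section \<open>Quotient groups\<close>

context
  fixes G :: "('a, 'b) monoid_scheme" (structure) and T :: "'a topology" and N :: "'a set"
  assumes tg: "topological_group G T" and nN: "N \<lhd> G"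
begin

interpretation normal N G by (rule nN)

lemma q_top: "topspace T = carrier G" using tg_top[OF tg] .

lemma quot_istop: "istopology (\<lambda>U. U \<subseteq> rcosets N \<and> openin T (\<Union>U))"
  unfolding istopology_def
proof (intro conjI allI impI)
  fix S S' assume S: "S \<subseteq> rcosets N \<and> openin T (\<Union>S)" and S': "S' \<subseteq> rcosets N \<and> openin T (\<Union>S')"
  have "\<Union>(S \<inter> S') = \<Union>S \<inter> \<Union>S'"
  proof
    show "\<Union>S \<inter> \<Union>S' \<subseteq> \<Union>(S \<inter> S')"
    proof
      fix x assume "x \<in> \<Union>S \<inter> \<Union>S'"
      then obtain A B where AB: "A \<in> S" "B \<in> S'" "x \<in> A" "x \<in> B" by blast
      have "A = B"
        using rcos_disjoint[OF subgroup_axioms] AB S S' unfolding pairwise_def disjnt_def by blast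
      then show "x \<in> \<Union>(S \<inter> S')" using AB by blast
    qed
  qed blast
  then show "openin T (\<Union>(S \<inter> S'))" using S S' by auto
  show "S \<inter> S' \<subseteq> rcosets N" using S by auto
next
  fix K assume K: "\<forall>S\<in>K. S \<subseteq> rcosets N \<and> openin T (\<Union>S)"
  have "\<Union>(\<Union>K) = \<Union>(Union ` K)" by blast
  then show "openin T (\<Union>(\<Union>K))" using K by auto
  show "\<Union>K \<subseteq> rcosets N" using K by auto
qed

lemma quot_openin: "openin (quot_topology G T N) W \<longleftrightarrow> W \<subseteq> rcosets N \<and> openin T (\<Union>W)"
  unfolding quot_topology_def using topology_inverse'[OF quot_istop] by simp

lemma quot_topspace: "topspace (quot_topology G T N) = rcosets N"
proof -
  have "openin (quot_topology G T N) (rcosets N)"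
    unfolding quot_openin using rcosets_part_G[OF subgroup_axioms] q_top openin_topspace[of T] by auto
  then have "rcosets N \<subseteq> topspace (quot_topology G T N)" by (rule openin_subset)
  moreover have "topspace (quot_topology G T N) \<subseteq> rcosets N"
    unfolding topspace_def using quot_openin by auto
  ultimately show ?thesis by blast
qed

lemma quot_union: "W \<subseteq> rcosets N \<Longrightarrow> {a \<in> carrier G. N #> a \<in> W} = \<Union>W"
proof safe
  fix a assume "a \<in> carrier G" "N #> a \<in> W"
  then show "a \<in> \<Union>W" using rcos_self[OF _ subgroup_axioms] by blast
next
  fix a A assume W: "W \<subseteq> rcosets N" and A: "A \<in> W" "a \<in> A"
  then obtain b where b: "b \<in> carrier G" "A = N #> b" unfolding RCOSETS_def by blast
  then show "a \<in> carrier G" using A(2) r_coset_subset_G[OF subset b(1)] by blast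
  have "N #> b = N #> a" using repr_independence[OF _ b(1) subgroup_axioms] A b by blast
  then show "N #> a \<in> W" using A b by simp
qed

lemma q_cont: "continuous_map T (quot_topology G T N) (\<lambda>a. N #> a)"
  unfolding continuous_map_def
proof (intro conjI allI impI)
  show "(\<lambda>a. N #> a) \<in> topspace T \<rightarrow> topspace (quot_topology G T N)"
    using q_top by (auto simp: quot_topspace RCOSETS_def)
  fix W assume "openin (quot_topology G T N) W"
  then have W: "W \<subseteq> rcosets N" "openin T (\<Union>W)" by (auto simp: quot_openin)
  show "openin T {x \<in> topspace T. N #> x \<in> W}" using quot_union[OF W(1)] W(2) q_top by simp
qed

lemma q_open: "open_map T (quot_topology G T N) (\<lambda>a. N #> a)"
  unfolding open_map_def
proof (intro allI impI)
  fix U assume U: "openin T U"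
  then have Uc: "U \<subseteq> carrier G" using openin_subset q_top by auto
  have "\<Union>((\<lambda>a. N #> a) ` U) = (\<Union>h\<in>N. (\<lambda>x. h \<otimes> x) ` U)"
    unfolding r_coset_def by blast
  moreover have "openin T (\<Union>h\<in>N. (\<lambda>x. h \<otimes> x) ` U)"
    using tg_open_ltrans[OF tg U] subgroup_axioms by (auto intro!: openin_Union dest: subgroup.mem_carrier)
  moreover have "(\<lambda>a. N #> a) ` U \<subseteq> rcosets N" using Uc by (auto simp: RCOSETS_def)
  ultimately show "openin (quot_topology G T N) ((\<lambda>a. N #> a) ` U)" by (simp add: quot_openin)
qed

lemma q_surj: "(\<lambda>a. N #> a) ` topspace T = topspace (quot_topology G T N)"
  using q_top by (auto simp: quot_topspace RCOSETS_def)

lemma q_quot: "quotient_map T (quot_topology G T N) (\<lambda>a. N #> a)"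
  by (rule continuous_open_imp_quotient_map[OF q_cont q_open q_surj])

end



lemma open_map_prod2:
  assumes f: "open_map X1 X2 f" and g: "open_map Y1 Y2 g"
  shows "open_map (prod_topology X1 Y1) (prod_topology X2 Y2) (\<lambda>(x, y). (f x, g y))"
  unfolding open_map_def
proof (intro allI impI)
  fix U assume U: "openin (prod_topology X1 Y1) U"
  show "openin (prod_topology X2 Y2) ((\<lambda>(x, y). (f x, g y)) ` U)"
  proof (subst openin_subopen, intro ballI)
    fix z assume "z \<in> (\<lambda>(x, y). (f x, g y)) ` U"
    then obtain x y where xy: "(x, y) \<in> U" "z = (f x, g y)" by auto
    obtain V W where VW: "openin X1 V" "openin Y1 W" "x \<in> V" "y \<in> W" "V \<times> W \<subseteq> U"
      using U[unfolded openin_prod_topology_alt, rule_format, OF xy(1)] by blast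
    have "openin (prod_topology X2 Y2) (f ` V \<times> g ` W)"
      using VW f g by (simp add: openin_prod_Times_iff open_map_def)
    moreover have "z \<in> f ` V \<times> g ` W" using xy VW by auto
    moreover have "f ` V \<times> g ` W \<subseteq> (\<lambda>(x, y). (f x, g y)) ` U" using VW(5) by force
    ultimately show "\<exists>T. openin (prod_topology X2 Y2) T \<and> z \<in> T \<and> T \<subseteq> (\<lambda>(x, y). (f x, g y)) ` U"
      by blast
  qed
qed

context
  fixes G :: "('a, 'b) monoid_scheme" (structure) and T :: "'a topology" and N :: "'a set"
  assumes tg: "topological_group G T" and nN: "N \<lhd> G"
begin

interpretation normal N G by (rule nN)

lemma qq_quot: "quotient_map (prod_topology T T) (prod_topology (quot_topology G T N) (quot_topology G T N))
   (\<lambda>(a, b). (N #> a, N #> b))"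
proof (rule continuous_open_imp_quotient_map)
  have c: "continuous_map T (quot_topology G T N) (\<lambda>a. N #> a)" using q_cont[OF tg nN] .
  have "continuous_map (prod_topology T T) (prod_topology (quot_topology G T N) (quot_topology G T N))
     (\<lambda>z. (N #> fst z, N #> snd z))"
    by (intro continuous_map_pairedI continuous_map_compose[OF continuous_map_fst c, unfolded o_def]
        continuous_map_compose[OF continuous_map_snd c, unfolded o_def])
  then show "continuous_map (prod_topology T T) (prod_topology (quot_topology G T N) (quot_topology G T N))
     (\<lambda>(a, b). (N #> a, N #> b))" by (simp add: case_prod_beta')
  show "open_map (prod_topology T T) (prod_topology (quot_topology G T N) (quot_topology G T N))
     (\<lambda>(a, b). (N #> a, N #> b))"
    by (rule open_map_prod2[OF q_open[OF tg nN] q_open[OF tg nN]])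
  have s: "(\<lambda>a. N #> a) ` topspace T = topspace (quot_topology G T N)" using q_surj[OF tg nN] .
  show "(\<lambda>(a, b). (N #> a, N #> b)) ` topspace (prod_topology T T) =
      topspace (prod_topology (quot_topology G T N) (quot_topology G T N))"
  proof (intro equalityI subsetI)
    fix z assume "z \<in> (\<lambda>(a, b). (N #> a, N #> b)) ` topspace (prod_topology T T)"
    then show "z \<in> topspace (prod_topology (quot_topology G T N) (quot_topology G T N))"
      using s by auto
  next
    fix z assume z: "z \<in> topspace (prod_topology (quot_topology G T N) (quot_topology G T N))"
    then obtain A B where AB: "z = (A, B)" "A \<in> topspace (quot_topology G T N)" "B \<in> topspace (quot_topology G T N)"
      by auto
    obtain a where a: "a \<in> topspace T" "A = N #> a" using AB(2) s by (metis imageE)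
    obtain b where b: "b \<in> topspace T" "B = N #> b" using AB(3) s by (metis imageE)
    show "z \<in> (\<lambda>(a, b). (N #> a, N #> b)) ` topspace (prod_topology T T)"
      using a b AB(1) by (intro image_eqI[of _ _ "(a, b)"]) auto
  qed
qed

lemma quot_tg: "topological_group (G Mod N) (quot_topology G T N)"
  unfolding topological_group_def
proof (intro conjI)
  have top: "topspace T = carrier G" using tg_top[OF tg] .
  show "group (G Mod N)" by (rule factorgroup_is_group)
  show "topspace (quot_topology G T N) = carrier (G Mod N)"
    using quot_topspace[OF tg nN] by (simp add: FactGroup_def)
  have c: "continuous_map T (quot_topology G T N) (\<lambda>a. N #> a)" using q_cont[OF tg nN] .
  have cm: "continuous_map (prod_topology T T) (quot_topology G T N) (\<lambda>z. N #> (fst z \<otimes> snd z))"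
    using continuous_map_compose[OF tg_cont_mult[OF tg continuous_map_fst continuous_map_snd] c]
    by (simp add: o_def)
  have "continuous_map (prod_topology T T) (quot_topology G T N)
      ((\<lambda>(x, y). x \<otimes>\<^bsub>G Mod N\<^esub> y) \<circ> (\<lambda>(a, b). (N #> a, N #> b)))"
  proof (rule continuous_map_eq[OF cm])
    fix z assume "z \<in> topspace (prod_topology T T)"
    then show "N #> (fst z \<otimes> snd z) = ((\<lambda>(x, y). x \<otimes>\<^bsub>G Mod N\<^esub> y) \<circ> (\<lambda>(a, b). (N #> a, N #> b))) z"
      using top by (auto simp: rcos_sum)
  qed
  then show "continuous_map (prod_topology (quot_topology G T N) (quot_topology G T N)) (quot_topology G T N)
      (\<lambda>(x, y). x \<otimes>\<^bsub>G Mod N\<^esub> y)"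
    by (rule continuous_compose_quotient_map[OF qq_quot])
  have ci: "continuous_map T (quot_topology G T N) (\<lambda>a. N #> inv a)"
    using continuous_map_compose[OF tg_invc[OF tg] c] by (simp add: o_def)
  have "continuous_map T (quot_topology G T N) ((\<lambda>x. inv\<^bsub>G Mod N\<^esub> x) \<circ> (\<lambda>a. N #> a))"
  proof (rule continuous_map_eq[OF ci])
    fix a assume a: "a \<in> topspace T"
    then have "N #> a \<in> carrier (G Mod N)" using top by (auto simp: FactGroup_def RCOSETS_def)
    then show "N #> inv a = ((\<lambda>x. inv\<^bsub>G Mod N\<^esub> x) \<circ> (\<lambda>a. N #> a)) a"
      using a top by (simp add: inv_FactGroup rcos_inv)
  qed
  then show "continuous_map (quot_topology G T N) (quot_topology G T N) (\<lambda>x. inv\<^bsub>G Mod N\<^esub> x)"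
    by (rule continuous_compose_quotient_map[OF q_quot[OF tg nN]])
qed

lemma quot_compact: "compact_space T \<Longrightarrow> compact_space (quot_topology G T N)"
  unfolding compact_space_def
  using image_compactin[OF _ q_cont[OF tg nN]] q_surj[OF tg nN] by metis

lemma quot_Hausdorff:
  assumes cl: "closedin T N"
  shows "Hausdorff_space (quot_topology G T N)"
  unfolding Hausdorff_space_def
proof (intro allI impI)
  have top: "topspace T = carrier G" using tg_top[OF tg] .
  fix A B assume AB: "A \<in> topspace (quot_topology G T N) \<and> B \<in> topspace (quot_topology G T N) \<and> A \<noteq> B"
  then obtain a b where ab: "a \<in> carrier G" "b \<in> carrier G" "A = N #> a" "B = N #> b"
    using quot_topspace[OF tg nN] by (auto simp: RCOSETS_def)
  have ne: "a \<otimes> inv b \<notin> N"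
  proof
    assume "a \<otimes> inv b \<in> N"
    then have "a \<in> N #> b" using rcos_module_rev[OF is_group ab(2) ab(1)] by simp
    then have "N #> b = N #> a" using repr_independence[OF _ ab(2) subgroup_axioms] by blast
    then show False using AB ab by simp
  qed
  define \<psi> where "\<psi> z = fst z \<otimes> inv (snd z)" for z
  have cpsi: "continuous_map (prod_topology T T) T \<psi>"
    unfolding \<psi>_def by (intro tg_cont_mult[OF tg] tg_cont_inv[OF tg] continuous_map_fst continuous_map_snd)
  have "openin T (topspace T - N)" using cl by blast
  then have W: "openin (prod_topology T T) {z \<in> topspace (prod_topology T T). \<psi> z \<in> topspace T - N}"
    using openin_continuous_map_preimage[OF cpsi] by blast
  have abW: "(a, b) \<in> {z \<in> topspace (prod_topology T T). \<psi> z \<in> topspace T - N}"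
    using ab ne top by (simp add: \<psi>_def)
  then obtain U V where UV: "openin T U" "openin T V" "a \<in> U" "b \<in> V"
    "U \<times> V \<subseteq> {z \<in> topspace (prod_topology T T). \<psi> z \<in> topspace T - N}"
    using W[unfolded openin_prod_topology_alt, rule_format, OF abW] by blast
  show "\<exists>U V. openin (quot_topology G T N) U \<and> openin (quot_topology G T N) V \<and> A \<in> U \<and> B \<in> V \<and> disjnt U V"
  proof (intro exI conjI)
    show "openin (quot_topology G T N) ((\<lambda>a. N #> a) ` U)" "openin (quot_topology G T N) ((\<lambda>a. N #> a) ` V)"
      using q_open[OF tg nN] UV by (auto simp: open_map_def)
    show "A \<in> (\<lambda>a. N #> a) ` U" "B \<in> (\<lambda>a. N #> a) ` V" using ab UV by auto
    show "disjnt ((\<lambda>a. N #> a) ` U) ((\<lambda>a. N #> a) ` V)"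
      unfolding disjnt_def
    proof (rule ccontr)
      assume "(\<lambda>a. N #> a) ` U \<inter> (\<lambda>a. N #> a) ` V \<noteq> {}"
      then obtain u v where uv: "u \<in> U" "v \<in> V" "N #> u = N #> v" by blast
      have uc: "u \<in> carrier G" and vc: "v \<in> carrier G"
        using uv UV openin_subset top by blast+
      have "u \<in> N #> v" using uv(3) rcos_self[OF uc subgroup_axioms] by simp
      then have "u \<otimes> inv v \<in> N" using rcos_module_imp[OF is_group vc] by simp
      moreover have "(u, v) \<in> {z \<in> topspace (prod_topology T T). \<psi> z \<in> topspace T - N}" using uv UV by blast
      ultimately show False by (simp add: \<psi>_def)
    qed
  qed
qed

end



lemma iter_comm_cong: "(\<And>i. i \<le> k \<Longrightarrow> y i = y' i) \<Longrightarrow> iter_comm H y k = iter_comm H y' k"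
  by (induction k) auto

lemma iter_comm_closed:
  assumes "group H" "\<And>i. i \<le> k \<Longrightarrow> y i \<in> carrier H"
  shows "iter_comm H y k \<in> carrier H"
  using assms(2)
proof (induction k)
  case 0 then show ?case by simp
next
  case (Suc k)
  then show ?case using assms(1) by (simp add: comm_def group.subgroup_self subgroup.m_closed group.inv_closed)
qed

lemma hom_iter_comm:
  assumes h: "group_hom G H h" and y: "\<And>i. i \<le> k \<Longrightarrow> y i \<in> carrier G"
  shows "h (iter_comm G y k) = iter_comm H (\<lambda>i. h (y i)) k"
  using y
proof (induction k)
  case 0 then show ?case by simp
next
  case (Suc k)
  interpret group_hom G H h by (rule h)
  have a: "iter_comm G y k \<in> carrier G" using iter_comm_closed[OF G.is_group] Suc.prems by simp
  have b: "y (Suc k) \<in> carrier G" using Suc.prems by simp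
  have "h (comm G (iter_comm G y k) (y (Suc k))) = comm H (h (iter_comm G y k)) (h (y (Suc k)))"
    using a b by (simp add: comm_def)
  then show ?case using Suc by simp
qed

lemma iter_comm_cont:
  assumes tg: "topological_group H TH" and k: "k \<le> n"
  shows "continuous_map (pow_topology TH n) TH (\<lambda>y. iter_comm H y k)"
  using k
proof (induction k)
  case 0
  have "(0::nat) \<in> {0..n}" by simp
  then show ?case unfolding pow_topology_def iter_comm.simps by (rule continuous_map_product_projection)
next
  case (Suc k)
  have p: "continuous_map (pow_topology TH n) TH (\<lambda>y. y (Suc k))"
    unfolding pow_topology_def using Suc.prems by (intro continuous_map_product_projection) simp
  have i: "continuous_map (pow_topology TH n) TH (\<lambda>y. iter_comm H y k)" using Suc by simp
  show ?case
    unfolding iter_comm.simps comm_def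
    by (intro tg_cont_mult[OF tg] tg_cont_inv[OF tg] i p)
qed

theorem corollary3p6:
  fixes G :: "('a, 'b) monoid_scheme" and T :: "'a topology" and N :: "'a set" and n :: nat
    and \<mu> :: "(nat \<Rightarrow> 'a) measure" and \<nu> :: "(nat \<Rightarrow> 'a set) measure"
  assumes "compact_group G T"
    and "N \<lhd> G"
    and "closedin T N"
    and "n \<ge> 1"
    and "haar_measure (pow_group G n) (pow_topology T n) \<mu>"
    and "haar_measure (pow_group (G Mod N) n) (pow_topology (quot_topology G T N) n) \<nu>"
  shows "comm_degree G n \<mu> \<le> comm_degree (G Mod N) n \<nu>"
proof -
  note cg = assms(1) and nN = assms(2) and cl = assms(3) and hK = assms(5) and hQ = assms(6)
  have tg: "topological_group G T" and cT: "compact_space T"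
    using cg by (auto simp: compact_group_def)
  interpret normal N G by (rule nN)
  have tgQ1: "topological_group (G Mod N) (quot_topology G T N)" using quot_tg[OF tg nN] .
  have top: "topspace T = carrier G" using tg_top[OF tg] .
  let ?K = "pow_group G n" and ?TK = "pow_topology T n"
  let ?Q = "pow_group (G Mod N) n" and ?TQ = "pow_topology (quot_topology G T N) n"
  define \<pi> where "\<pi> x = (\<lambda>i\<in>{0..n}. N #>\<^bsub>G\<^esub> x i)" for x
  have tgK: "topological_group ?K ?TK" using pow_tg[OF tg] .
  have cK: "compact_space ?TK" using pow_compact[OF cT] .
  have tgQ: "topological_group ?Q ?TQ" using pow_tg[OF tgQ1] .
  have nQ: "normal_space ?TQ"
    using pow_compact[OF quot_compact[OF tg nN cT]] pow_Hausdorff[OF quot_Hausdorff[OF tg nN cl]]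
    by (intro compact_Hausdorff_or_regular_imp_normal_space) auto
  have LK: "linv_prob ?K ?TK \<mu>" using haar_linv[OF hK] .
  have LQ: "linv_prob ?Q ?TQ \<nu>" using haar_linv[OF hQ] .
  have outer: "\<forall>A\<in>sets \<nu>. emeasure \<nu> A = (INF U\<in>{U. openin ?TQ U \<and> A \<subseteq> U}. emeasure \<nu> U)"
    using hQ by (simp add: haar_measure_def)
  have cQ1: "carrier (G Mod N) = rcosets\<^bsub>G\<^esub> N" by (simp add: FactGroup_def)
  have hom: "\<pi> \<in> hom ?K ?Q"
    unfolding hom_def
  proof (intro CollectI conjI ballI)
    show "\<pi> \<in> carrier ?K \<rightarrow> carrier ?Q"
      by (auto simp: pow_group_def \<pi>_def cQ1 RCOSETS_def PiE_iff)
    fix x y assume x: "x \<in> carrier ?K" and y: "y \<in> carrier ?K"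
    show "\<pi> (x \<otimes>\<^bsub>?K\<^esub> y) = \<pi> x \<otimes>\<^bsub>?Q\<^esub> \<pi> y"
      using x y by (auto simp: pow_group_def \<pi>_def PiE_iff rcos_sum intro!: restrict_ext)
  qed
  have surj: "\<pi> ` carrier ?K = carrier ?Q"
  proof (intro equalityI subsetI)
    fix z assume "z \<in> \<pi> ` carrier ?K"
    then show "z \<in> carrier ?Q" using hom by (auto simp: hom_def)
  next
    fix z assume z: "z \<in> carrier ?Q"
    have "\<forall>i\<in>{0..n}. \<exists>a. a \<in> carrier G \<and> z i = N #>\<^bsub>G\<^esub> a"
      using z by (auto simp: pow_group_def cQ1 RCOSETS_def PiE_iff)
    from bchoice[OF this] obtain a where a: "\<forall>i\<in>{0..n}. a i \<in> carrier G \<and> z i = N #>\<^bsub>G\<^esub> a i"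
      by blast
    have "restrict a {0..n} \<in> carrier ?K" using a by (auto simp: pow_group_def)
    moreover have "\<pi> (restrict a {0..n}) = z"
      using a z by (auto simp: \<pi>_def pow_group_def PiE_iff intro!: restrict_ext extensionalityI[of _ "{0..n}"])
    ultimately show "z \<in> \<pi> ` carrier ?K" by blast
  qed
  have cpi: "continuous_map ?TK ?TQ \<pi>"
    unfolding pow_topology_def \<pi>_def
  proof (subst continuous_map_componentwise, intro conjI ballI)
    show "(\<lambda>x. \<lambda>i\<in>{0..n}. N #>\<^bsub>G\<^esub> x i) ` topspace (product_topology (\<lambda>_. T) {0..n}) \<subseteq> extensional {0..n}"
      by auto
    fix k assume k: "k \<in> {0..n}"
    have "continuous_map (product_topology (\<lambda>_. T) {0..n}) (quot_topology G T N) (\<lambda>x. N #>\<^bsub>G\<^esub> x k)"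
      using continuous_map_compose[OF continuous_map_product_projection[OF k] q_cont[OF tg nN]]
      by (simp add: o_def)
    then show "continuous_map (product_topology (\<lambda>_. T) {0..n}) (quot_topology G T N) (\<lambda>x. (\<lambda>i\<in>{0..n}. N #>\<^bsub>G\<^esub> x i) k)"
      using k by simp
  qed
  define D where "D = {y \<in> carrier ?Q. iter_comm (G Mod N) y n = \<one>\<^bsub>G Mod N\<^esub>}"
  define C where "C = {x \<in> carrier ?K. iter_comm G x n = \<one>\<^bsub>G\<^esub>}"
  have Dcl: "closedin ?TQ D"
  proof -
    have t1: "t1_space (quot_topology G T N)"
      using Hausdorff_imp_t1_space[OF quot_Hausdorff[OF tg nN cl]] .
    have "N \<in> topspace (quot_topology G T N)"
      using quot_topspace[OF tg nN] subgroup_in_rcosets[OF is_group] by simp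
    then have "closedin (quot_topology G T N) {N}" by (rule closedin_t1_singleton[OF t1])
    from closedin_continuous_map_preimage[OF iter_comm_cont[OF tgQ1 order_refl] this]
    have "closedin ?TQ {y \<in> topspace ?TQ. iter_comm (G Mod N) y n \<in> {N}}" .
    moreover have "{y \<in> topspace ?TQ. iter_comm (G Mod N) y n \<in> {N}} = D"
      unfolding D_def using tg_top[OF tgQ] by simp
    ultimately show ?thesis by simp
  qed
  have CD: "x \<in> carrier ?K \<and> \<pi> x \<in> D" if x: "x \<in> C" for x
  proof -
    have xK: "x \<in> carrier ?K" and x1: "iter_comm G x n = \<one>\<^bsub>G\<^esub>" using x by (auto simp: C_def)
    have xi: "\<And>i. i \<le> n \<Longrightarrow> x i \<in> carrier G" using xK by (auto simp: pow_group_def PiE_iff)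
    have gh: "group_hom G (G Mod N) (\<lambda>a. N #>\<^bsub>G\<^esub> a)"
      by (intro group_hom.intro group_hom_axioms.intro is_group factorgroup_is_group r_coset_hom_Mod)
    have "iter_comm (G Mod N) (\<pi> x) n = iter_comm (G Mod N) (\<lambda>i. N #>\<^bsub>G\<^esub> x i) n"
      by (rule iter_comm_cong) (simp add: \<pi>_def)
    also have "\<dots> = N #>\<^bsub>G\<^esub> iter_comm G x n"
      using hom_iter_comm[OF gh xi] by simp
    also have "\<dots> = N" using x1 coset_mult_one[OF subset] by simp
    finally have "iter_comm (G Mod N) (\<pi> x) n = \<one>\<^bsub>G Mod N\<^esub>" by simp
    moreover have "\<pi> x \<in> carrier ?Q" using hom xK by (auto simp: hom_def)
    ultimately show ?thesis using xK by (simp add: D_def)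
  qed
  have "measure \<mu> C \<le> measure \<nu> D"
    by (rule measure_compare[OF tgK cK LK tgQ LQ nQ outer hom surj cpi Dcl CD])
  then show ?thesis by (simp add: comm_degree_def C_def D_def)
qed

end
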